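(* Let $A:\mathbb{N}\to\mathbb{Z}$ and $B:\mathbb{N}\to\mathbb{Z}_{>0}$ be primitive recursive functions, and let $q_n = A(n)/B(n)$. Suppose there is a primitive recursive function $C:\mathbb{N}\to\mathbb{N}$ (a Cauchy modulus of convergence) such that for every $e\in\mathbb{N}$ and all $i,j\ge C(e)$ we have $|q_i-q_j|<2^{-e}$. Then there exist an integer $I$ and a primitive recursive function $P:\mathbb{Z}^+\to\{-1,0,1\}$ such that $$I+\sum_{i=1}^{\infty}P(i)\,2^{-i}=\lim_{n\to\infty} q_n,$$ i.e. the limit of $(q_n)$ is the value of a Signed Primitive Recursive Computed Number.
   Context: A Signed Primitive Recursive Computed Number (SPRCN) is a pair $(I,P)$ where $I\in\mathbb{Z}$ and $P:\mathbb{Z}^+\to\{-1,0,1\}$ is a primitive recursive function; it represents the rational sequence $\left(I+\sum_{i=1}^n P(i)2^{-i}\right)_n$, whose limit $I+\sum_{i=1}^\infty P(i)2^{-i}$ is called the value (or limit) of the SPRCN. *)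

theory Defs
  imports Complex_Main "HOL-Library.Nat_Bijection"
begin

text \<open>Primitive recursive functions on natural numbers, in the style of Paulson's
  HOL-ex Primrec: functions on argument lists, missing arguments default to 0.\<close>

definition nth0 :: "nat list \<Rightarrow> nat \<Rightarrow> nat" where
  "nth0 l i = (if i < length l then l ! i else 0)"

definition hd0 :: "nat list \<Rightarrow> nat" where
  "hd0 l = nth0 l 0"

fun PREC :: "(nat list \<Rightarrow> nat) \<Rightarrow> (nat list \<Rightarrow> nat) \<Rightarrow> nat list \<Rightarrow> nat" where
  "PREC f g [] = f []"
| "PREC f g (x # l) = rec_nat (f l) (\<lambda>y r. g (r # y # l)) x"

inductive PRIMREC :: "(nat list \<Rightarrow> nat) \<Rightarrow> bool" where
  SC: "PRIMREC (\<lambda>l. Suc (hd0 l))"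
| CONSTANT: "PRIMREC (\<lambda>l. k)"
| PROJ: "PRIMREC (\<lambda>l. nth0 l i)"
| COMP: "PRIMREC g \<Longrightarrow> (\<forall>f \<in> set fs. PRIMREC f) \<Longrightarrow> PRIMREC (\<lambda>l. g (map (\<lambda>f. f l) fs))"
| PREC: "PRIMREC f \<Longrightarrow> PRIMREC g \<Longrightarrow> PRIMREC (PREC f g)"

definition primrec_nat :: "(nat \<Rightarrow> nat) \<Rightarrow> bool" where
  "primrec_nat h \<longleftrightarrow> PRIMREC (\<lambda>l. h (hd0 l))"

definition primrec_int :: "(nat \<Rightarrow> int) \<Rightarrow> bool" where
  "primrec_int h \<longleftrightarrow> primrec_nat (\<lambda>n. int_encode (h n))"

text \<open>Functions on positive integers (represented as nat \<Rightarrow> int, only arguments \<ge> 1 matter)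
  are primitive recursive iff the shifted function n \<mapsto> P (n+1) is.\<close>
definition primrec_pos_int :: "(nat \<Rightarrow> int) \<Rightarrow> bool" where
  "primrec_pos_int P \<longleftrightarrow> primrec_int (\<lambda>n. P (Suc n))"

definition sprcn_value :: "int \<Rightarrow> (nat \<Rightarrow> int) \<Rightarrow> real" where
  "sprcn_value I P = real_of_int I + (\<Sum>i. real_of_int (P (Suc i)) / 2 ^ Suc i)"

end

theory Submission
  imports Defs
begin

lemma nth0_simps[simp]: "nth0 [] i = 0" "nth0 (x#l) 0 = x" "nth0 (x#l) (Suc i) = nth0 l i"
  by (auto simp: nth0_def)

lemma PREC_eqI: "f [] = h [] \<Longrightarrow> (\<And>x t. rec_nat (f t) (\<lambda>y r. g (r#y#t)) x = h (x#t)) \<Longrightarrow> PREC f g = h"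
proof
  fix l assume "f [] = h []" "\<And>x t. rec_nat (f t) (\<lambda>y r. g (r#y#t)) x = h (x#t)"
  then show "PREC f g l = h l" by (cases l) auto
qed

lemma comp1: "primrec_nat f \<Longrightarrow> PRIMREC G \<Longrightarrow> PRIMREC (\<lambda>l. f (G l))"
  unfolding primrec_nat_def
  using COMP[of "\<lambda>l. f (hd0 l)" "[G]"] by (simp add: hd0_def)

lemma comp2: "PRIMREC (\<lambda>l. h (nth0 l 0) (nth0 l 1)) \<Longrightarrow> PRIMREC F \<Longrightarrow> PRIMREC G
   \<Longrightarrow> PRIMREC (\<lambda>l. h (F l) (G l))"
  using COMP[of "\<lambda>l. h (nth0 l 0) (nth0 l 1)" "[F,G]"] by (simp add: numeral_2_eq_2)

lemma P0: "PRIMREC (\<lambda>l. nth0 l i)" by (rule PROJ)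

lemma pr_add: "PRIMREC (\<lambda>l. nth0 l 0 + nth0 l 1)"
proof -
  have "PREC (\<lambda>l. nth0 l 0) (\<lambda>l. Suc (hd0 l)) = (\<lambda>l. nth0 l 0 + nth0 l 1)"
  apply (rule PREC_eqI)
   apply simp
  subgoal for x t by (induct x) (auto simp: hd0_def)
  done
  moreover have "PRIMREC (PREC (\<lambda>l. nth0 l 0) (\<lambda>l. Suc (hd0 l)))"
    by (intro PRIMREC.PREC PROJ SC)
  ultimately show ?thesis by simp
qed

lemma pr_mult: "PRIMREC (\<lambda>l. nth0 l 0 * nth0 l 1)"
proof -
  have "PREC (\<lambda>l. 0) (\<lambda>l. nth0 l 0 + nth0 l 2) = (\<lambda>l. nth0 l 0 * nth0 l 1)"
  apply (rule PREC_eqI)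
   apply simp
  subgoal for x t by (induct x) (auto simp: numeral_2_eq_2)
  done
  moreover have "PRIMREC (PREC (\<lambda>l. 0) (\<lambda>l. nth0 l 0 + nth0 l 2))"
    by (intro PRIMREC.PREC CONSTANT comp2[OF pr_add] PROJ)
  ultimately show ?thesis by simp
qed

lemma pr_pred: "PRIMREC (\<lambda>l. nth0 l 0 - 1)"
proof -
  have "PREC (\<lambda>l. 0) (\<lambda>l. nth0 l 1) = (\<lambda>l. nth0 l 0 - 1)"
  apply (rule PREC_eqI)
   apply simp
  subgoal for x t by (induct x) (auto)
  done
  moreover have "PRIMREC (PREC (\<lambda>l. 0) (\<lambda>l. nth0 l 1))"
    by (intro PRIMREC.PREC CONSTANT PROJ)
  ultimately show ?thesis by simp
qed

lemma pr_sub: "PRIMREC (\<lambda>l. nth0 l 0 - nth0 l 1)"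
proof -
  have "PREC (\<lambda>l. nth0 l 0) (\<lambda>l. nth0 l 0 - 1) = (\<lambda>l. nth0 l 1 - nth0 l 0)"
  apply (rule PREC_eqI)
   apply simp
  subgoal for x t by (induct x) (auto)
  done
  moreover have "PRIMREC (PREC (\<lambda>l. nth0 l 0) (\<lambda>l. nth0 l 0 - 1))"
    by (intro PRIMREC.PREC pr_pred PROJ)
  ultimately have *: "PRIMREC (\<lambda>l. nth0 l 1 - nth0 l 0)" by simp
  have "PRIMREC (\<lambda>l. (\<lambda>a b. b - a) (nth0 l 1) (nth0 l 0))"
    by (rule comp2[where h="\<lambda>a b. b - a", OF _ PROJ PROJ]) (use * in simp)
  then show ?thesis by simp
qed

lemma pr_pow2: "PRIMREC (\<lambda>l. 2 ^ nth0 l 0)"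
proof -
  have "PREC (\<lambda>l. 1) (\<lambda>l. nth0 l 0 + nth0 l 0) = (\<lambda>l. 2 ^ nth0 l 0)"
  apply (rule PREC_eqI)
   apply simp
  subgoal for x t by (induct x) (auto)
  done
  moreover have "PRIMREC (PREC (\<lambda>l. 1) (\<lambda>l. nth0 l 0 + nth0 l 0))"
    by (intro PRIMREC.PREC CONSTANT comp2[OF pr_add] PROJ)
  ultimately show ?thesis by simp
qed

definition mydiv :: "nat \<Rightarrow> nat \<Rightarrow> nat" where
  "mydiv n m = (\<Sum>k<n. 1 - (Suc k * m - n))"

lemma mydiv_eq: "0 < m \<Longrightarrow> mydiv n m = n div m"
proof -
  assume m: "0 < m"
  have "mydiv n m = (\<Sum>k<n. if k < n div m then 1 else 0)"
    unfolding mydiv_def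
  proof (rule sum.cong)
    fix k assume "k \<in> {..<n}"
    have "Suc k * m \<le> n \<longleftrightarrow> k < n div m"
      using less_eq_div_iff_mult_less_eq[OF m, of "Suc k" n] by (simp only: Suc_le_eq)
    then show "1 - (Suc k * m - n) = (if k < n div m then 1 else 0)" by (auto simp del: mult_Suc)
  qed simp
  also have "\<dots> = card ({..<n} \<inter> {k. k < n div m})"
    by (simp add: sum.If_cases)
  also have "{..<n} \<inter> {k. k < n div m} = {..<n div m}"
    using div_le_dividend[of n m] by (auto intro: less_le_trans)
  finally show ?thesis by simp
qed

lemma pr_div: "PRIMREC (\<lambda>l. mydiv (nth0 l 0) (nth0 l 1))"
proof -
  define g where "g = (\<lambda>l. nth0 l 0 + (1 - (Suc (nth0 l 1) * nth0 l 3 - nth0 l 2)))"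
  have gpr: "PRIMREC g" unfolding g_def
    by (intro comp2[OF pr_add] comp2[OF pr_sub] comp2[OF pr_mult] PROJ CONSTANT
        comp1[OF SC[folded primrec_nat_def]])
  have T: "PREC (\<lambda>l. 0) g (j # t) = (\<Sum>k<j. 1 - (Suc k * nth0 t 1 - nth0 t 0))" for j t
    by (induct j) (auto simp: g_def numeral_3_eq_3 numeral_2_eq_2)
  have "PRIMREC (\<lambda>l. PREC (\<lambda>l. 0) g (map (\<lambda>f. f l) [\<lambda>l. nth0 l 0, \<lambda>l. nth0 l 0, \<lambda>l. nth0 l 1]))"
    by (rule COMP) (auto intro: PRIMREC.PREC CONSTANT gpr PROJ)
  then have "PRIMREC (\<lambda>l. PREC (\<lambda>l. 0) g [nth0 l 0, nth0 l 0, nth0 l 1])" by (simp only: list.map)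
  moreover have "(\<lambda>l. PREC (\<lambda>l. 0) g [nth0 l 0, nth0 l 0, nth0 l 1]) = (\<lambda>l. mydiv (nth0 l 0) (nth0 l 1))"
    by (simp only: T) (simp add: mydiv_def)
  ultimately show ?thesis by simp
qed

lemma SC': "primrec_nat Suc" unfolding primrec_nat_def by (rule SC)

lemma pn_id: "primrec_nat (\<lambda>n. n)"
  unfolding primrec_nat_def hd0_def by (rule PROJ)
lemma pn_const: "primrec_nat (\<lambda>n. c)"
  unfolding primrec_nat_def by (rule CONSTANT)
lemma pn_comp: "primrec_nat f \<Longrightarrow> primrec_nat g \<Longrightarrow> primrec_nat (\<lambda>n. f (g n))"
  unfolding primrec_nat_def by (rule comp1[unfolded primrec_nat_def])
lemma pn_bin: "PRIMREC (\<lambda>l. h (nth0 l 0) (nth0 l 1)) \<Longrightarrow> primrec_nat f \<Longrightarrow> primrec_nat g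
   \<Longrightarrow> primrec_nat (\<lambda>n. h (f n) (g n))"
  unfolding primrec_nat_def by (rule comp2)
lemma pn_add: "primrec_nat f \<Longrightarrow> primrec_nat g \<Longrightarrow> primrec_nat (\<lambda>n. f n + g n)"
  by (rule pn_bin[OF pr_add])
lemma pn_mult: "primrec_nat f \<Longrightarrow> primrec_nat g \<Longrightarrow> primrec_nat (\<lambda>n. f n * g n)"
  by (rule pn_bin[OF pr_mult])
lemma pn_sub: "primrec_nat f \<Longrightarrow> primrec_nat g \<Longrightarrow> primrec_nat (\<lambda>n. f n - g n)"
  by (rule pn_bin[OF pr_sub])
lemma pn_div: "primrec_nat f \<Longrightarrow> primrec_nat g \<Longrightarrow> primrec_nat (\<lambda>n. mydiv (f n) (g n))"
  by (rule pn_bin[OF pr_div])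
lemma pn_pow2: "primrec_nat f \<Longrightarrow> primrec_nat (\<lambda>n. 2 ^ f n)"
  using pn_comp[of "\<lambda>n. 2 ^ n" f] pr_pow2 unfolding primrec_nat_def hd0_def by simp
lemma pn_Suc: "primrec_nat f \<Longrightarrow> primrec_nat (\<lambda>n. Suc (f n))"
  using pn_comp[OF SC'] .

lemmas pn_intros = pn_id pn_const pn_add pn_mult pn_sub pn_div pn_pow2 pn_Suc

lemma int_encode_nonneg: "0 \<le> i \<Longrightarrow> int_encode i = 2 * nat i"
  by (simp add: int_encode_def sum_encode_def)
lemma int_encode_neg: "i < 0 \<Longrightarrow> int_encode i = Suc (2 * nat (- i - 1))"
  by (simp add: int_encode_def sum_encode_def)

theorem theorem1:
  fixes A :: "nat \<Rightarrow> int" and B :: "nat \<Rightarrow> int" and C :: "nat \<Rightarrow> nat"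
  assumes "primrec_int A" and "primrec_int B" and "\<And>n. B n > 0"
    and "primrec_nat C"
    and "\<And>e i j. i \<ge> C e \<Longrightarrow> j \<ge> C e \<Longrightarrow>
           \<bar>real_of_int (A i) / real_of_int (B i) - real_of_int (A j) / real_of_int (B j)\<bar> < 1 / 2 ^ e"
  shows "\<exists>(I::int) (P::nat \<Rightarrow> int). primrec_pos_int P \<and> (\<forall>i\<ge>1. P i \<in> {-1, 0, 1}) \<and>
           (\<lambda>n. real_of_int (A n) / real_of_int (B n)) \<longlonglongrightarrow> sprcn_value I P"
proof -
  define q where "q = (\<lambda>n. real_of_int (A n) / real_of_int (B n))"
  have cau: "\<And>e i j. i \<ge> C e \<Longrightarrow> j \<ge> C e \<Longrightarrow> \<bar>q i - q j\<bar> < 1 / 2 ^ e"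
    using assms(5) unfolding q_def by blast
  have "Cauchy q"
  proof (rule metric_CauchyI)
    fix r :: real assume "0 < r"
    obtain e where e: "(1/2::real) ^ e < r" using real_arch_pow_inv[OF \<open>0 < r\<close>, of "1/2"] by auto
    show "\<exists>M. \<forall>m\<ge>M. \<forall>n\<ge>M. dist (q m) (q n) < r"
    proof (intro exI allI impI)
      fix m n assume "C e \<le> m" "C e \<le> n"
      with cau[of e m n] e show "dist (q m) (q n) < r" by (simp add: dist_real_def power_one_over)
    qed
  qed
  then obtain x where lim: "q \<longlonglongrightarrow> x" using Cauchy_convergent_iff convergent_def by blast
  have close: "\<bar>q i - x\<bar> \<le> 1 / 2 ^ e" if "i \<ge> C e" for i e
  proof -
    have "(\<lambda>j. \<bar>q i - q j\<bar>) \<longlonglongrightarrow> \<bar>q i - x\<bar>"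
      by (intro tendsto_intros lim)
    moreover have "\<exists>N. \<forall>n\<ge>N. \<bar>q i - q n\<bar> \<le> 1 / 2 ^ e"
      using cau[OF that] by (intro exI[of _ "C e"]) (auto intro: less_imp_le)
    ultimately show ?thesis by (rule LIMSEQ_le_const2)
  qed
  have Bpos: "real_of_int (B n) > 0" for n using assms(3)[of n] by simp
  define Mc :: nat where "Mc = nat \<bar>A (C 0)\<bar> + 1"
  have posN: "A i + int Mc * B i \<ge> 0" if "i \<ge> C 0" for i
  proof -
    have "\<bar>q i - q (C 0)\<bar> < 1" using cau[OF that, of "C 0"] by simp
    moreover have "\<bar>q (C 0)\<bar> \<le> \<bar>A (C 0)\<bar>"
    proof -
      have "real_of_int (B (C 0)) \<ge> 1" using assms(3)[of "C 0"] by simp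
      then have "\<bar>real_of_int (A (C 0))\<bar> / real_of_int (B (C 0)) \<le> \<bar>real_of_int (A (C 0))\<bar>"
        by (simp add: divide_le_eq mult_le_cancel_left1 )
      moreover have "\<bar>q (C 0)\<bar> = \<bar>real_of_int (A (C 0))\<bar> / real_of_int (B (C 0))"
        unfolding q_def using Bpos[of "C 0"] by (simp add: abs_divide)
      ultimately show ?thesis by simp
    qed
    moreover have "real Mc = real_of_int \<bar>A (C 0)\<bar> + 1" unfolding Mc_def by simp
    ultimately have "q i + real Mc > 0" by linarith
    then have "(real_of_int (A i) + real Mc * real_of_int (B i)) / real_of_int (B i) > 0"
      unfolding q_def using Bpos[of i] by (simp add: field_simps)
    then have "real_of_int (A i) + real Mc * real_of_int (B i) > 0"
      using Bpos[of i] by (simp add: zero_less_divide_iff)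
    then have "real_of_int (A i + int Mc * B i) > 0" by simp
    then show ?thesis by linarith
  qed
  define eA where "eA = (\<lambda>n. int_encode (A n))"
  define eB where "eB = (\<lambda>n. int_encode (B n))"
  define bf where "bf = (\<lambda>m. mydiv (eB m) 2)"
  define hf where "hf = (\<lambda>m. mydiv (eA m) 2)"
  define odf where "odf = (\<lambda>m. eA m - 2 * hf m)"
  define Nf where "Nf = (\<lambda>m. (Mc * bf m + (1 - odf m) * hf m) - odf m * Suc (hf m))"
  define mk where "mk = (\<lambda>k. C (k + 3) + C 0)"
  define bm where "bm = (\<lambda>k. bf (mk k))"
  define Nm where "Nm = (\<lambda>k. Nf (mk k))"
  define Dn where "Dn = (\<lambda>k. mydiv (2 ^ Suc k * Nm k + bm k) (2 * bm k))"
  define Pe where "Pe = (\<lambda>k. 2 * (Dn (Suc k) - 2 * Dn k) + (2 * (2 * Dn k - Dn (Suc k)) - 1))"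
  define P where "P = (\<lambda>i. int (Dn i) - 2 * int (Dn (i - 1)))"
  define I where "I = int (Dn 0) - int Mc"
  have peA: "primrec_nat eA" using assms(1) unfolding primrec_int_def eA_def .
  have peB: "primrec_nat eB" using assms(2) unfolding primrec_int_def eB_def .
  have pbf: "primrec_nat bf" unfolding bf_def by (intro pn_intros peB)
  have phf: "primrec_nat hf" unfolding hf_def by (intro pn_intros peA)
  have pod: "primrec_nat odf" unfolding odf_def by (intro pn_intros peA phf)
  have pNf: "primrec_nat Nf" unfolding Nf_def by (intro pn_intros pod phf pbf)
  have pmk: "primrec_nat mk" unfolding mk_def
    by (intro pn_intros pn_comp[OF assms(4)])
  have pbm: "primrec_nat bm" unfolding bm_def by (rule pn_comp[OF pbf pmk])
  have pNm: "primrec_nat Nm" unfolding Nm_def by (rule pn_comp[OF pNf pmk])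
  have pDn: "primrec_nat Dn" unfolding Dn_def by (intro pn_intros pNm pbm)
  have pDn1: "primrec_nat (\<lambda>k. Dn (Suc k))" by (rule pn_comp[OF pDn pn_Suc[OF pn_id]])
  have pPe: "primrec_nat Pe" unfolding Pe_def by (intro pn_intros pDn pDn1)
  have bf_eq: "int (bf m) = B m" for m
    using assms(3)[of m] by (simp add: bf_def eB_def mydiv_eq int_encode_nonneg)
  have Nf_eq: "int (Nf m) = A m + int Mc * B m" if "A m + int Mc * B m \<ge> 0" for m
  proof (cases "A m \<ge> 0")
    case True
    then have "hf m = nat (A m)" "odf m = 0"
      by (simp_all add: hf_def odf_def eA_def mydiv_eq int_encode_nonneg)
    then show ?thesis using True bf_eq[of m] by (simp add: Nf_def)
  next
    case False
    then have h: "hf m = nat (- A m - 1)" "odf m = 1"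
      by (simp_all add: hf_def odf_def eA_def mydiv_eq int_encode_neg)
    then have "Nf m = Mc * bf m - Suc (nat (- A m - 1))" by (simp add: Nf_def)
    moreover have le: "Suc (nat (- A m - 1)) \<le> Mc * bf m"
    proof -
      have "int (Suc (nat (- A m - 1))) \<le> int (Mc * bf m)"
        using False that bf_eq[of m] by simp
      then show ?thesis by (simp only: of_nat_le_iff)
    qed
    moreover have "int (Suc (nat (- A m - 1))) = - A m" using False by simp
    ultimately have "int (Nf m) = int (Mc * bf m) - (- A m)" by (simp only: of_nat_diff)
    then show ?thesis using bf_eq[of m] by simp
  qed
  have Dbound: "\<bar>real (Dn k) - 2 ^ k * (x + real Mc)\<bar> \<le> 5/8" for k
  proof -
    define m where "m = mk k"
    have m1: "m \<ge> C (k+3)" and m0: "m \<ge> C 0" unfolding m_def mk_def by auto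
    define b where "b = bm k"
    define N where "N = Nm k"
    have rb: "real b = real_of_int (B m)" unfolding b_def bm_def m_def
      using bf_eq[of "mk k"] by (metis of_int_of_nat_eq)
    have rN: "real N = real_of_int (A m) + real Mc * real_of_int (B m)"
      unfolding N_def Nm_def m_def using Nf_eq[OF posN[OF m0[unfolded m_def]]]
      by (metis of_int_add of_int_mult of_int_of_nat_eq)
    have bpos: "real b > 0" using rb Bpos by simp
    have "0 < b" using bpos by simp
    define X where "X = 2 ^ Suc k * N + b"
    define d where "d = Dn k"
    have dX: "d = X div (2*b)" using \<open>0 < b\<close> unfolding d_def Dn_def X_def N_def b_def
      by (simp add: mydiv_eq)
    have l1: "d * (2*b) \<le> X" unfolding dX by (rule div_times_less_eq_dividend)
    have l2: "X < (d + 1) * (2*b)"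
    proof -
      have m: "X mod (2*b) < 2*b" using \<open>0<b\<close> by simp
      have e: "X div (2*b) * (2*b) + X mod (2*b) = X" by (rule div_mult_mod_eq)
      from e m have "X < X div (2*b) * (2*b) + 2*b" by linarith
      then show ?thesis unfolding dX by (simp add: algebra_simps)
    qed
    define t :: real where "t = 2 ^ k"
    have tpos: "t > 0" unfolding t_def by simp
    have NB: "real N = real b * (q m + real Mc)"
      unfolding rN rb q_def using Bpos[of m] by (simp add: field_simps)
    have r1: "real d * (2 * real b) \<le> 2 * t * real N + real b"
    proof -
      have "real (d * (2*b)) \<le> real X" using l1 by (simp only: of_nat_le_iff)
      then show ?thesis unfolding X_def t_def by (simp add: algebra_simps)
    qed
    have r2: "2 * t * real N + real b < (real d + 1) * (2 * real b)"
    proof -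
      have "real X < real ((d + 1) * (2*b))" using l2 by (simp only: of_nat_less_iff)
      then show ?thesis unfolding X_def t_def by (simp add: algebra_simps)
    qed
    have u1: "real d \<le> t * (q m + real Mc) + 1/2"
    proof -
      from r1 have "real b * (2 * real d) \<le> real b * (2 * t * (q m + real Mc) + 1)"
        unfolding NB by (simp add: algebra_simps)
      then have "2 * real d \<le> 2 * t * (q m + real Mc) + 1" using bpos by simp
      then show ?thesis by simp
    qed
    have u2: "t * (q m + real Mc) - 1/2 < real d"
    proof -
      from r2 have "real b * (2 * t * (q m + real Mc) + 1) < real b * (2 * real d + 2)"
        unfolding NB by (simp add: algebra_simps)
      then have "2 * t * (q m + real Mc) + 1 < 2 * real d + 2" using bpos by simp
      then show ?thesis by simp
    qed
    have "\<bar>q m - x\<bar> \<le> 1 / 2 ^ (k+3)" by (rule close[OF m1])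
    then have "t * \<bar>q m - x\<bar> \<le> t * (1 / 2 ^ (k+3))" using tpos by (intro mult_left_mono) auto
    also have "t * (1 / 2 ^ (k+3)) = 1/8" unfolding t_def by (simp add: power_add)
    finally have f: "\<bar>t * (q m) - t * x\<bar> \<le> 1/8" using tpos
      by (simp add: abs_mult right_diff_distrib[symmetric])
    have e1: "t * (q m + real Mc) = t * q m + t * real Mc" "t * (x + real Mc) = t * x + t * real Mc"
      by (simp_all add: algebra_simps)
    have "\<bar>real d - t * (x + real Mc)\<bar> \<le> 5/8" using u1 u2 f unfolding e1 abs_le_iff by linarith
    then show ?thesis unfolding d_def t_def .
  qed
  have Pdig: "P (Suc k) \<in> {-1, 0, 1}" for k
  proof -
    have "\<bar>real (Dn (Suc k)) - 2 * real (Dn k)\<bar> \<le> 15/8"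
    proof -
      have eq: "2 ^ Suc k * (x + real Mc) = 2 * (2 ^ k * (x + real Mc))" by simp
      have a: "\<bar>real (Dn (Suc k)) - 2 * (2 ^ k * (x + real Mc))\<bar> \<le> 5/8"
        using Dbound[of "Suc k"] unfolding eq .
      show ?thesis using a Dbound[of k] unfolding abs_le_iff by linarith
    qed
    then have "\<bar>real_of_int (P (Suc k))\<bar> < 2" unfolding P_def by simp
    then have "\<bar>P (Suc k)\<bar> < 2" by linarith
    then show ?thesis by auto
  qed
  have Pe_eq: "Pe k = int_encode (P (Suc k))" for k
  proof -
    have Pk: "P (Suc k) = int (Dn (Suc k)) - 2 * int (Dn k)" by (simp add: P_def)
    from Pdig[of k] consider "int (Dn (Suc k)) - 2 * int (Dn k) = -1"
      | "int (Dn (Suc k)) - 2 * int (Dn k) = 0" | "int (Dn (Suc k)) - 2 * int (Dn k) = 1"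
      unfolding Pk by auto
    then show ?thesis
    proof cases
      case 1
      then have e: "2 * Dn k = Dn (Suc k) + 1" by linarith
      show ?thesis unfolding Pk 1 by (simp add: Pe_def e int_encode_def sum_encode_def)
    next
      case 2
      then have e: "2 * Dn k = Dn (Suc k)" by linarith
      show ?thesis unfolding Pk 2 by (simp add: Pe_def e int_encode_def sum_encode_def)
    next
      case 3
      then have e: "Dn (Suc k) = 2 * Dn k + 1" by linarith
      show ?thesis unfolding Pk 3 by (simp add: Pe_def e int_encode_def sum_encode_def)
    qed
  qed
  have prP: "primrec_pos_int P"
    unfolding primrec_pos_int_def primrec_int_def
    using pPe by (simp add: Pe_eq[symmetric] fun_eq_iff)
  have digits: "\<forall>i\<ge>1. P i \<in> {-1, 0, 1}"
  proof (intro allI impI)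
    fix i :: nat assume "1 \<le> i"
    then obtain k where "i = Suc k" by (cases i) auto
    then show "P i \<in> {-1, 0, 1}" using Pdig by simp
  qed
  have partial: "real_of_int I + (\<Sum>i<n. real_of_int (P (Suc i)) / 2 ^ Suc i) = real (Dn n) / 2 ^ n - real Mc" for n
  proof (induct n)
    case 0 then show ?case by (simp add: I_def)
  next
    case (Suc n)
    have "real_of_int I + (\<Sum>i<Suc n. real_of_int (P (Suc i)) / 2 ^ Suc i)
        = real (Dn n) / 2 ^ n - real Mc + real_of_int (P (Suc n)) / 2 ^ Suc n"
      using Suc by simp
    also have "\<dots> = real (Dn (Suc n)) / 2 ^ Suc n - real Mc"
      by (simp add: P_def field_simps)
    finally show ?case .
  qed
  have conv: "(\<lambda>n. real (Dn n) / 2 ^ n - real Mc) \<longlonglongrightarrow> x"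
  proof -
    have b: "\<bar>real (Dn n) / 2 ^ n - real Mc - x\<bar> \<le> 5/8 * (1/2) ^ n" for n
    proof -
      have "real (Dn n) / 2 ^ n - real Mc - x = (real (Dn n) - 2 ^ n * (x + real Mc)) / 2 ^ n"
        by (simp add: field_simps)
      then have "\<bar>real (Dn n) / 2 ^ n - real Mc - x\<bar> = \<bar>real (Dn n) - 2 ^ n * (x + real Mc)\<bar> / 2 ^ n"
        by simp
      also have "\<dots> \<le> (5/8) / 2 ^ n" by (rule divide_right_mono[OF Dbound]) simp
      finally show ?thesis by (simp add: power_one_over)
    qed
    have z: "(\<lambda>n. 5/8 * (1/2::real) ^ n) \<longlonglongrightarrow> 0"
      by (intro tendsto_mult_right_zero LIMSEQ_power_zero) simp
    have "(\<lambda>n. real (Dn n) / 2 ^ n - real Mc - x) \<longlonglongrightarrow> 0"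
    proof (rule tendsto_sandwich[OF _ _ _ z])
      have b1: "- (5/8 * (1/2) ^ n) \<le> real (Dn n) / 2 ^ n - real Mc - x" for n
        using b[of n, unfolded abs_le_iff] by linarith
      have b2: "real (Dn n) / 2 ^ n - real Mc - x \<le> 5/8 * (1/2) ^ n" for n
        using b[of n, unfolded abs_le_iff] by linarith
      show "\<forall>\<^sub>F n in sequentially. - (5/8 * (1/2) ^ n) \<le> real (Dn n) / 2 ^ n - real Mc - x"
        by (rule always_eventually, rule allI, rule b1)
      show "\<forall>\<^sub>F n in sequentially. real (Dn n) / 2 ^ n - real Mc - x \<le> 5/8 * (1/2) ^ n"
        by (rule always_eventually, rule allI, rule b2)
      show "(\<lambda>n. - (5/8 * (1/2::real) ^ n)) \<longlonglongrightarrow> 0" using tendsto_minus[OF z] by simp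
    qed
    then show ?thesis by (simp add: LIM_zero_iff)
  qed
  have "(\<lambda>i. real_of_int (P (Suc i)) / 2 ^ Suc i) sums (x - real_of_int I)"
    unfolding sums_def
  proof -
    have "(\<lambda>n. real_of_int I + (\<Sum>i<n. real_of_int (P (Suc i)) / 2 ^ Suc i) - real_of_int I) \<longlonglongrightarrow> x - real_of_int I"
      unfolding partial by (intro tendsto_intros conv)
    then show "(\<lambda>n. \<Sum>i<n. real_of_int (P (Suc i)) / 2 ^ Suc i) \<longlonglongrightarrow> x - real_of_int I" by simp
  qed
  then have "sprcn_value I P = x" unfolding sprcn_value_def by (simp add: sums_unique[symmetric])
  then show ?thesis using prP digits lim unfolding q_def by blast
qed

end
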